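(* Let $\mathbf{d}=(d_1\ge d_2\ge\cdots\ge d_n)$ be a zero-free graphical degree sequence. Consider the following procedure applied to $\mathbf{d}$: (1) If $d_1\ge n-2$ or $d_n\ge\lfloor n/2\rfloor$, return True. (2) Otherwise, if $d_1=d_n$, return False. (3) Otherwise, let $s_u=\max\{s: s<n-d_{s+1}\}$. If there exists an integer $s$ with $d_1+1\le s\le s_u$ such that both $(d_1,\dots,d_s)$ and $(d_{s+1},\dots,d_n)$ are graphical, return False. (4) Otherwise, for each integer $l$ from $d_n+1$ to $\min\{\lfloor n/2\rfloor,\, n-d_1-1\}$: if $d_{n+1-l}<l$, let $m=\min\{i: d_i<l\}$; if moreover $l\le n-m$, then for every choice of $l$ indices from $\{m,m+1,\dots,n\}$, let $\mathbf{s_1}$ be the subsequence of $\mathbf{d}$ at these indices and $\mathbf{s_2}$ the subsequence of $\mathbf{d}$ at the remaining $n-l$ indices; if $\mathbf{s_1}$ and $\mathbf{s_2}$ both have even sum and are both graphical, return False. (5) If the procedure has not returned, return True. Then this procedure returns True if and only if $\mathbf{d}$ is forcibly connected.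
   Context: A graphical degree sequence of length $n$ is a non-increasing sequence of non-negative integers that is the vertex degree sequence of some simple graph (finite, undirected, no loops or multiple edges) on $n$ vertices; such a graph is a realization of the sequence. A finite sequence of non-negative integers is called graphical if, when sorted in non-increasing order, it is a graphical degree sequence. A sequence is zero-free if all its terms are positive. A graphical degree sequence is forcibly connected if every one of its realizations is a connected graph. *)

theory Defs
  imports Main
begin

definition simple_graph_on :: "nat \<Rightarrow> (nat \<Rightarrow> nat \<Rightarrow> bool) \<Rightarrow> bool" where
  "simple_graph_on n E \<longleftrightarrow>
     (\<forall>u v. E u v \<longrightarrow> u < n \<and> v < n) \<and>
     (\<forall>u v. E u v \<longrightarrow> E v u) \<and>
     (\<forall>u. \<not> E u u)"

definition degree :: "nat \<Rightarrow> (nat \<Rightarrow> nat \<Rightarrow> bool) \<Rightarrow> nat \<Rightarrow> nat" where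
  "degree n E u = card {v. v < n \<and> E u v}"

definition realizes :: "(nat \<Rightarrow> nat \<Rightarrow> bool) \<Rightarrow> nat list \<Rightarrow> bool" where
  "realizes E d \<longleftrightarrow> simple_graph_on (length d) E \<and>
     (\<forall>i < length d. degree (length d) E i = d ! i)"

definition connected_graph :: "nat \<Rightarrow> (nat \<Rightarrow> nat \<Rightarrow> bool) \<Rightarrow> bool" where
  "connected_graph n E \<longleftrightarrow>
     (\<forall>u < n. \<forall>v < n. (u, v) \<in> {(a, b). a < n \<and> b < n \<and> E a b}\<^sup>*)"

definition nonincreasing :: "nat list \<Rightarrow> bool" where
  "nonincreasing d \<longleftrightarrow> sorted_wrt (\<ge>) d"

definition graphical_degree_sequence :: "nat list \<Rightarrow> bool" where
  "graphical_degree_sequence d \<longleftrightarrow> nonincreasing d \<and> (\<exists>E. realizes E d)"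

definition graphical :: "nat list \<Rightarrow> bool" where
  "graphical xs \<longleftrightarrow> graphical_degree_sequence (rev (sort xs))"

definition zero_free :: "nat list \<Rightarrow> bool" where
  "zero_free d \<longleftrightarrow> (\<forall>x \<in> set d. 0 < x)"

definition forcibly_connected :: "nat list \<Rightarrow> bool" where
  "forcibly_connected d \<longleftrightarrow> graphical_degree_sequence d \<and>
     (\<forall>E. realizes E d \<longrightarrow> connected_graph (length d) E)"

text \<open>1-based access: dd d i = d_i.\<close>
definition dd :: "nat list \<Rightarrow> nat \<Rightarrow> nat" where
  "dd d i = d ! (i - 1)"

definition subseq_at :: "nat list \<Rightarrow> nat set \<Rightarrow> nat list" where
  "subseq_at d I = nths d ((\<lambda>i. i - 1) ` I)"

definition subseq_off :: "nat list \<Rightarrow> nat set \<Rightarrow> nat list" where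
  "subseq_off d I = nths d ({0..<length d} - (\<lambda>i. i - 1) ` I)"

definition step1 :: "nat list \<Rightarrow> bool" where
  "step1 d \<longleftrightarrow> (let n = length d in int (dd d 1) \<ge> int n - 2 \<or> dd d n \<ge> n div 2)"

definition step2 :: "nat list \<Rightarrow> bool" where
  "step2 d \<longleftrightarrow> dd d 1 = dd d (length d)"

definition s_u :: "nat list \<Rightarrow> nat" where
  "s_u d = Max {s. s < length d \<and> int s < int (length d) - int (dd d (s + 1))}"

definition step3 :: "nat list \<Rightarrow> bool" where
  "step3 d \<longleftrightarrow> (\<exists>s. dd d 1 + 1 \<le> s \<and> s \<le> s_u d \<and>
      graphical (take s d) \<and> graphical (drop s d))"

definition min_index_below :: "nat list \<Rightarrow> nat \<Rightarrow> nat" where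
  "min_index_below d l = (LEAST i. 1 \<le> i \<and> i \<le> length d \<and> dd d i < l)"

definition step4 :: "nat list \<Rightarrow> bool" where
  "step4 d \<longleftrightarrow> (let n = length d in
     \<exists>l. dd d n + 1 \<le> l \<and> int l \<le> min (int (n div 2)) (int n - int (dd d 1) - 1) \<and>
       dd d (n + 1 - l) < l \<and>
       (let m = min_index_below d l in
         l \<le> n - m \<and>
         (\<exists>I. I \<subseteq> {m..n} \<and> card I = l \<and>
            even (sum_list (subseq_at d I)) \<and> even (sum_list (subseq_off d I)) \<and>
            graphical (subseq_at d I) \<and> graphical (subseq_off d I))))"

definition procedure :: "nat list \<Rightarrow> bool" where
  "procedure d = (if step1 d then True
                  else if step2 d then False
                  else if step3 d then False
                  else if step4 d then False
                  else True)"

end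

theory Submission
  imports Defs "HOL-Combinatorics.Permutations"
begin

definition closed_set :: "nat \<Rightarrow> (nat \<Rightarrow> nat \<Rightarrow> bool) \<Rightarrow> nat set \<Rightarrow> bool" where
  "closed_set n E A \<longleftrightarrow> A \<subseteq> {..<n} \<and> (\<forall>x y. E x y \<longrightarrow> x \<in> A \<longrightarrow> y \<in> A)"

definition gcut :: "nat \<Rightarrow> (nat \<Rightarrow> nat \<Rightarrow> bool) \<Rightarrow> nat set \<Rightarrow> bool" where
  "gcut n E A \<longleftrightarrow> closed_set n E A \<and> A \<noteq> {} \<and> A \<noteq> {..<n}"

lemma closed_card:
  assumes "simple_graph_on n E" "closed_set n E A" "x \<in> A"
  shows "degree n E x + 1 \<le> card A"
proof -
  have fin: "finite A" using assms(2) unfolding closed_set_def by (meson finite_lessThan finite_subset)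
  have "{v. v < n \<and> E x v} \<subseteq> A - {x}" using assms unfolding closed_set_def simple_graph_on_def by auto
  hence "degree n E x \<le> card (A - {x})" unfolding degree_def using fin by (simp add: card_mono)
  moreover have "card (A - {x}) + 1 = card A" using fin assms(3)
    by (metis Suc_eq_plus1 card_Suc_Diff1)
  ultimately show ?thesis by simp
qed

lemma degree_less:
  assumes "simple_graph_on n E" "x < n"
  shows "degree n E x < n"
proof -
  have "{v. v < n \<and> E x v} \<subseteq> {..<n} - {x}" using assms unfolding simple_graph_on_def by auto
  hence "degree n E x \<le> card ({..<n} - {x})" unfolding degree_def by (simp add: card_mono)
  thus ?thesis using assms(2) by simp
qed

lemma closed_compl:
  assumes "simple_graph_on n E" "closed_set n E A"
  shows "closed_set n E ({..<n} - A)"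
  using assms unfolding closed_set_def simple_graph_on_def by blast

lemma conn_cut:
  assumes "simple_graph_on n E"
  shows "connected_graph n E \<longleftrightarrow> \<not> (\<exists>A. gcut n E A)"
proof
  assume c: "connected_graph n E"
  show "\<not> (\<exists>A. gcut n E A)"
  proof
    assume "\<exists>A. gcut n E A"
    then obtain A where A: "gcut n E A" by blast
    then obtain a where a: "a \<in> A" unfolding gcut_def by blast
    from A obtain b where b: "b < n" "b \<notin> A" unfolding gcut_def closed_set_def by blast
    have an: "a < n" using A a unfolding gcut_def closed_set_def by blast
    have "(a, b) \<in> {(a, b). a < n \<and> b < n \<and> E a b}\<^sup>*" using c an b unfolding connected_graph_def by blast
    hence "b \<in> A"
    proof (induction rule: rtrancl_induct)
      case base then show ?case using a by simp
    next
      case (step y z) then show ?case using A unfolding gcut_def closed_set_def by blast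
    qed
    thus False using b by blast
  qed
next
  assume nc: "\<not> (\<exists>A. gcut n E A)"
  show "connected_graph n E"
    unfolding connected_graph_def
  proof (intro allI impI)
    fix u v assume u: "u < n" and v: "v < n"
    let ?R = "{(a, b). a < n \<and> b < n \<and> E a b}"
    define A where "A = {w. w < n \<and> (u, w) \<in> ?R\<^sup>*}"
    have cl: "closed_set n E A" unfolding closed_set_def A_def
    proof (intro conjI allI impI)
      fix x y assume "E x y" "x \<in> {w. w < n \<and> (u, w) \<in> ?R\<^sup>*}"
      moreover have "y < n" using \<open>E x y\<close> assms unfolding simple_graph_on_def by blast
      ultimately show "y \<in> {w. w < n \<and> (u, w) \<in> ?R\<^sup>*}"
        by (auto intro: rtrancl_into_rtrancl)
    qed auto
    have "u \<in> A" using u unfolding A_def by simp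
    hence "A = {..<n}" using nc cl unfolding gcut_def by blast
    thus "(u, v) \<in> ?R\<^sup>*" using v unfolding A_def by blast
  qed
qed

lemma perm_realizes:
  assumes r: "realizes E ys" and m: "mset xs = mset ys"
  shows "\<exists>E'. realizes E' xs \<and> ((\<exists>A. gcut (length ys) E A) \<longrightarrow> (\<exists>A. gcut (length xs) E' A))"
proof -
  obtain p where p: "p permutes {..<length ys}" "permute_list p ys = xs"
    using mset_eq_permutation[OF m] by blast
  define n where "n = length ys"
  have ln: "length xs = n" using m n_def mset_eq_length by metis
  have pin: "\<And>u. p u < n \<longleftrightarrow> u < n" using p(1) unfolding n_def
    by (metis lessThan_iff permutes_not_in permutes_in_image)
  have injp: "inj p" using p(1) permutes_inj by blast
  have surjp: "\<And>w. \<exists>u. w = p u" using p(1) permutes_surj by (metis surj_def)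
  define E' where "E' = (\<lambda>u v. E (p u) (p v))"
  have sg: "simple_graph_on n E" using r unfolding realizes_def n_def by blast
  have sg': "simple_graph_on n E'" using sg pin unfolding simple_graph_on_def E'_def
    by (metis injp injD)
  have deg: "degree n E' u = degree n E (p u)" for u
  proof -
    have "p ` {v. v < n \<and> E' u v} = {w. w < n \<and> E (p u) w}"
    proof (rule set_eqI, rule iffI)
      fix w assume "w \<in> p ` {v. v < n \<and> E' u v}"
      thus "w \<in> {w. w < n \<and> E (p u) w}" using pin unfolding E'_def by auto
    next
      fix w assume w: "w \<in> {w. w < n \<and> E (p u) w}"
      obtain v where "w = p v" using surjp by blast
      thus "w \<in> p ` {v. v < n \<and> E' u v}" using w pin unfolding E'_def by auto
    qed
    moreover have "card (p ` {v. v < n \<and> E' u v}) = card {v. v < n \<and> E' u v}"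
      using injp by (simp add: card_image inj_on_subset)
    ultimately show ?thesis unfolding degree_def by metis
  qed
  have "realizes E' xs" unfolding realizes_def
  proof (intro conjI allI impI)
    show "simple_graph_on (length xs) E'" using sg' ln by simp
    fix i assume i: "i < length xs"
    have "xs ! i = ys ! p i" using p permute_list_nth i ln n_def by metis
    moreover have "degree n E (p i) = ys ! p i" using r pin i ln unfolding realizes_def n_def by metis
    ultimately show "degree (length xs) E' i = xs ! i" using deg ln by simp
  qed
  moreover have "gcut n E' {u. u < n \<and> p u \<in> A}" if A: "gcut n E A" for A
  proof -
    have c1: "closed_set n E' {u. u < n \<and> p u \<in> A}"
      using A sg' unfolding gcut_def closed_set_def E'_def simple_graph_on_def by blast
    obtain a where "a \<in> A" using A unfolding gcut_def by blast
    moreover obtain u where "a = p u" using surjp by blast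
    ultimately have "u \<in> {u. u < n \<and> p u \<in> A}" using A pin unfolding gcut_def closed_set_def by auto
    moreover obtain b where b: "b < n" "b \<notin> A" using A unfolding gcut_def closed_set_def by blast
    moreover obtain v where "b = p v" using surjp by blast
    ultimately show ?thesis using c1 pin unfolding gcut_def by auto
  qed
  ultimately show ?thesis using ln n_def by metis
qed


lemma graphical_iff: "graphical xs \<longleftrightarrow> (\<exists>E. realizes E xs)"
proof
  assume "graphical xs"
  then obtain E where "realizes E (rev (sort xs))"
    unfolding graphical_def graphical_degree_sequence_def by blast
  thus "\<exists>E. realizes E xs" using perm_realizes[of E "rev (sort xs)" xs] by auto
next
  assume "\<exists>E. realizes E xs"
  then obtain E where "realizes E xs" by blast
  then obtain E' where "realizes E' (rev (sort xs))"
    using perm_realizes[of E xs "rev (sort xs)"] by auto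
  moreover have "nonincreasing (rev (sort xs))"
    unfolding nonincreasing_def using sorted_sort[of xs] by (simp add: sorted_wrt_rev)
  ultimately show "graphical xs"
    unfolding graphical_def graphical_degree_sequence_def by blast
qed

lemma append_realizes:
  assumes r1: "realizes E1 xs" and r2: "realizes E2 ys"
  shows "\<exists>E. realizes E (xs @ ys) \<and> (xs \<noteq> [] \<longrightarrow> ys \<noteq> [] \<longrightarrow> (\<exists>A. gcut (length (xs @ ys)) E A))"
proof -
  define a where "a = length xs"
  define b where "b = length ys"
  define E where "E = (\<lambda>u v. (u < a \<and> v < a \<and> E1 u v) \<or> (a \<le> u \<and> a \<le> v \<and> E2 (u - a) (v - a)))"
  have s1: "simple_graph_on a E1" using r1 unfolding realizes_def a_def by blast
  have s2: "simple_graph_on b E2" using r2 unfolding realizes_def b_def by blast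
  have sg: "simple_graph_on (a + b) E"
    using s1 s2 unfolding simple_graph_on_def E_def by fastforce
  have deg1: "degree (a + b) E u = xs ! u" if "u < a" for u
  proof -
    have "{v. v < a + b \<and> E u v} = {v. v < a \<and> E1 u v}"
      using that s1 unfolding E_def simple_graph_on_def by auto
    thus ?thesis using r1 that unfolding realizes_def degree_def a_def by simp
  qed
  have deg2: "degree (a + b) E u = ys ! (u - a)" if "a \<le> u" "u < a + b" for u
  proof -
    have "{v. v < a + b \<and> E u v} = (\<lambda>w. w + a) ` {w. w < b \<and> E2 (u - a) w}"
    proof (rule set_eqI, rule iffI)
      fix v assume "v \<in> {v. v < a + b \<and> E u v}"
      hence "a \<le> v" "v < a + b" "E2 (u - a) (v - a)" using that unfolding E_def by auto
      thus "v \<in> (\<lambda>w. w + a) ` {w. w < b \<and> E2 (u - a) w}"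
        by (intro image_eqI[of _ _ "v - a"]) auto
    next
      fix v assume "v \<in> (\<lambda>w. w + a) ` {w. w < b \<and> E2 (u - a) w}"
      thus "v \<in> {v. v < a + b \<and> E u v}" using that unfolding E_def by auto
    qed
    hence "degree (a + b) E u = card {w. w < b \<and> E2 (u - a) w}"
      unfolding degree_def by (simp add: card_image)
    thus ?thesis using r2 that unfolding realizes_def degree_def b_def by auto
  qed
  have "realizes E (xs @ ys)" unfolding realizes_def
  proof (intro conjI allI impI)
    show "simple_graph_on (length (xs @ ys)) E" using sg a_def b_def by simp
    fix i assume i: "i < length (xs @ ys)"
    show "degree (length (xs @ ys)) E i = (xs @ ys) ! i"
      using deg1 deg2 i unfolding a_def b_def by (simp add: nth_append)
  qed
  moreover have "gcut (a + b) E {..<a}" if "xs \<noteq> []" "ys \<noteq> []"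
  proof -
    have "a > 0" "b > 0" using that unfolding a_def b_def by auto
    moreover have "a \<in> {..<a+b}" using \<open>b > 0\<close> by simp
    ultimately show ?thesis unfolding gcut_def closed_set_def E_def
      by (metis empty_iff lessThan_iff less_add_same_cancel1 lessThan_subset_iff le_add1 not_le)
  qed
  ultimately show ?thesis unfolding a_def b_def by auto
qed

lemma nths_as_map: "nths xs A = map (nth xs) (filter (\<lambda>i. i \<in> A) [0..<length xs])"
proof (induction xs arbitrary: A)
  case Nil then show ?case by simp
next
  case (Cons x xs)
  have "[0..<length (x # xs)] = 0 # map Suc [0..<length xs]"
    by (metis map_Suc_upt upt_conv_Cons zero_less_Suc length_Cons)
  then show ?case using Cons by (simp add: nths_Cons filter_map comp_def)
qed

lemma nths_cong_len:
  assumes "A \<inter> {..<length xs} = B \<inter> {..<length xs}"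
  shows "nths xs A = nths xs B"
proof -
  have "filter (\<lambda>i. i \<in> A) [0..<length xs] = filter (\<lambda>i. i \<in> B) [0..<length xs]"
    using assms by (intro filter_cong) auto
  thus ?thesis by (simp add: nths_as_map)
qed

lemma mset_nths_split: "mset (nths xs A) + mset (nths xs (- A)) = mset xs"
proof (induction xs arbitrary: A)
  case Nil then show ?case by simp
next
  case (Cons x xs)
  have "{j. Suc j \<in> - A} = - {j. Suc j \<in> A}" by auto
  then show ?case using Cons[of "{j. Suc j \<in> A}"] by (simp add: nths_Cons)
qed

lemma restrict_graphical:
  assumes r: "realizes E d" and c: "closed_set (length d) E C"
  shows "graphical (nths d C)"
proof -
  define n where "n = length d"
  define cs where "cs = filter (\<lambda>i. i \<in> C) [0..<n]"
  define l where "l = length cs"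
  have dcs: "distinct cs" unfolding cs_def by simp
  have setcs: "set cs = C" using c unfolding cs_def closed_set_def n_def by auto
  have nt: "nths d C = map (nth d) cs" unfolding cs_def n_def by (simp add: nths_as_map)
  define E' where "E' = (\<lambda>a b. a < l \<and> b < l \<and> E (cs ! a) (cs ! b))"
  have sg: "simple_graph_on n E" using r unfolding realizes_def n_def by blast
  have sg': "simple_graph_on l E'" using sg dcs unfolding simple_graph_on_def E'_def
    by (metis nth_eq_iff_index_eq)
  have deg: "degree l E' a = d ! (cs ! a)" if a: "a < l" for a
  proof -
    have ca: "cs ! a \<in> C" using a setcs nth_mem l_def by blast
    have "nth cs ` {b. b < l \<and> E' a b} = {y. y < n \<and> E (cs ! a) y}"
    proof (rule set_eqI, rule iffI)
      fix y assume "y \<in> nth cs ` {b. b < l \<and> E' a b}"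
      thus "y \<in> {y. y < n \<and> E (cs ! a) y}" using sg unfolding E'_def simple_graph_on_def by auto
    next
      fix y assume y: "y \<in> {y. y < n \<and> E (cs ! a) y}"
      hence "y \<in> C" using c ca unfolding closed_set_def by blast
      then obtain b where "b < l" "cs ! b = y" using setcs unfolding l_def by (metis in_set_conv_nth)
      thus "y \<in> nth cs ` {b. b < l \<and> E' a b}" using y a unfolding E'_def by auto
    qed
    moreover have "inj_on (nth cs) {b. b < l \<and> E' a b}"
      using dcs unfolding l_def by (simp add: inj_on_nth)
    ultimately have "degree l E' a = degree n E (cs ! a)" unfolding degree_def
      by (metis card_image)
    moreover have "cs ! a < n" using ca c unfolding closed_set_def n_def by blast
    ultimately show ?thesis using r unfolding realizes_def n_def by simp
  qed
  have "realizes E' (nths d C)" unfolding realizes_def nt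
    using sg' deg l_def by simp
  thus ?thesis using graphical_iff by blast
qed

lemma handshake:
  assumes r: "realizes E d"
  shows "even (sum_list d)"
proof -
  define n where "n = length d"
  have sg: "simple_graph_on n E" using r unfolding realizes_def n_def by blast
  define P where "P = Sigma {..<n} (\<lambda>u. {v. v < n \<and> E u v})"
  have "sum_list d = (\<Sum>i<n. d ! i)" unfolding n_def by (simp add: sum_list_sum_nth atLeast0LessThan)
  also have "\<dots> = (\<Sum>i<n. card {v. v < n \<and> E i v})"
    using r unfolding realizes_def degree_def n_def by simp
  also have "\<dots> = card P" unfolding P_def by (simp add: card_SigmaI)
  finally have s: "sum_list d = card P" .
  define L where "L = {p \<in> P. fst p < snd p}"
  define U where "U = {p \<in> P. snd p < fst p}"
  have fP: "finite P" unfolding P_def by simp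
  have PLU: "P = L \<union> U"
  proof -
    have "fst p \<noteq> snd p" if "p \<in> P" for p using that sg unfolding P_def simple_graph_on_def by auto
    thus ?thesis unfolding L_def U_def by (auto simp: nat_neq_iff)
  qed
  have "L \<inter> U = {}" unfolding L_def U_def by auto
  hence "card P = card L + card U" using PLU fP
    by (metis card_Un_disjoint finite_Un)
  moreover have "U = prod.swap ` L" using sg unfolding U_def L_def P_def simple_graph_on_def
    by (auto simp: image_iff)
  moreover have "card (prod.swap ` L) = card L" by (simp add: card_image)
  ultimately show ?thesis using s by simp
qed


lemma regular_realizable:
  assumes ka: "k < a" and ev: "even (a * k)"
  shows "\<exists>E. realizes E (replicate a k)"
proof -
  define h where "h = k div 2"
  define S where "S = {1..h} \<union> {a - h..<a} \<union> (if odd k then {a div 2} else {})"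
  have h2: "2 * h \<le> k" "k \<le> 2 * h + 1" unfolding h_def by auto
  have aev: "odd k \<Longrightarrow> even a" using ev by auto
  have S1: "x \<in> S \<Longrightarrow> 1 \<le> x \<and> x < a" for x
    using ka h2 aev unfolding S_def by (auto split: if_splits)
  have S2: "x \<in> S \<Longrightarrow> a - x \<in> S" for x
    using ka h2 aev unfolding S_def by (auto split: if_splits)
  have S3: "card S = k"
  proof -
    have d1: "{1..h} \<inter> {a - h..<a} = {}" using ka h2 by auto
    have c1: "card ({1..h} \<union> {a - h..<a}) = 2 * h" using d1 ka h2
      by (subst card_Un_disjoint) auto
    show ?thesis
    proof (cases "odd k")
      case True
      hence "a div 2 \<notin> {1..h} \<union> {a - h..<a}" using aev ka h2 by auto
      hence "card S = 2 * h + 1" using True c1 unfolding S_def by simp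
      thus ?thesis using True h_def by presburger
    next
      case False
      hence "card S = 2 * h" using c1 unfolding S_def by simp
      thus ?thesis using False h_def by presburger
    qed
  qed
  define \<delta> where "\<delta> = (\<lambda>u v. if v \<le> u then u - v else u + a - (v::nat))"
  define E where "E = (\<lambda>u v. u < a \<and> v < a \<and> \<delta> u v \<in> S)"
  have d0: "\<delta> u u = 0" for u unfolding \<delta>_def by simp
  have n0: "0 \<notin> S" using S1 by fastforce
  have sym: "\<delta> v u = a - \<delta> u v" if "u < a" "v < a" "u \<noteq> v" for u v
    using that unfolding \<delta>_def by auto
  have sg: "simple_graph_on a E" unfolding simple_graph_on_def
  proof (intro conjI allI impI)
    fix u v assume "E u v" thus "u < a" unfolding E_def by simp
  next
    fix u v assume "E u v" thus "v < a" unfolding E_def by simp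
  next
    fix u v assume e: "E u v"
    have "u \<noteq> v"
    proof
      assume "u = v" hence "\<delta> u v = 0" using d0 by simp
      thus False using e n0 unfolding E_def by simp
    qed
    hence "\<delta> v u = a - \<delta> u v" using sym e unfolding E_def by blast
    thus "E v u" using e S2 unfolding E_def by simp
  next
    fix u show "\<not> E u u" using d0[of u] n0 unfolding E_def by simp
  qed
  have deg: "degree a E u = k" if u: "u < a" for u
  proof -
    have "\<delta> u ` {v. v < a \<and> E u v} = S"
    proof (rule set_eqI, rule iffI)
      fix s assume "s \<in> \<delta> u ` {v. v < a \<and> E u v}" thus "s \<in> S" unfolding E_def by auto
    next
      fix s assume s: "s \<in> S"
      define v where "v = (if s \<le> u then u - s else u + a - s)"
      have "v < a" "\<delta> u v = s" using S1[OF s] u unfolding v_def \<delta>_def by auto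
      thus "s \<in> \<delta> u ` {v. v < a \<and> E u v}" using s u unfolding E_def by force
    qed
    moreover have "inj_on (\<delta> u) {v. v < a \<and> E u v}"
    proof (rule inj_onI)
      fix v w assume "v \<in> {v. v < a \<and> E u v}" "w \<in> {v. v < a \<and> E u v}" "\<delta> u v = \<delta> u w"
      thus "v = w" using u unfolding \<delta>_def by (simp split: if_splits)
    qed
    ultimately show ?thesis unfolding degree_def using S3 by (metis card_image)
  qed
  have "realizes E (replicate a k)" unfolding realizes_def using sg deg by simp
  thus ?thesis by blast
qed


lemma noninc_nth:
  assumes "nonincreasing d" "i \<le> j" "j < length d"
  shows "d ! j \<le> d ! i"
proof (cases "i = j")
  case False
  hence "i < j" using assms by simp
  thus ?thesis using assms sorted_wrt_nth_less unfolding nonincreasing_def by fastforce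
qed simp

lemma realizes_closed_card:
  assumes r: "realizes E d" and c: "closed_set (length d) E X" and x: "x \<in> X"
  shows "d ! x + 1 \<le> card X"
proof -
  have "x < length d" using c x unfolding closed_set_def by blast
  hence "degree (length d) E x = d ! x" using r unfolding realizes_def by blast
  moreover have "simple_graph_on (length d) E" using r unfolding realizes_def by blast
  ultimately show ?thesis using closed_card c x by metis
qed

lemma card_compl:
  assumes "closed_set n E A"
  shows "card ({..<n} - A) = n - card A" "card A \<le> n"
  using assms unfolding closed_set_def
  by (auto simp: card_Diff_subset finite_subset card_mono intro: card_mono[of "{..<n}", simplified])

lemma step1_sound:
  assumes r: "realizes E d" and ni: "nonincreasing d" and zf: "zero_free d" and s1: "step1 d"
    and A: "gcut (length d) E A"
  shows False
proof -
  define n where "n = length d"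
  define B where "B = {..<n} - A"
  have sg: "simple_graph_on n E" using r unfolding realizes_def n_def by blast
  have cA: "closed_set n E A" using A unfolding gcut_def n_def by blast
  have cB: "closed_set n E B" using closed_compl[OF sg cA] unfolding B_def .
  have cardAB: "card A + card B = n" using card_compl[OF cA] unfolding B_def by simp
  obtain a where a: "a \<in> A" using A unfolding gcut_def by blast
  obtain b where b: "b \<in> B" using A unfolding gcut_def B_def closed_set_def n_def by blast
  have an: "a < n" using a cA unfolding closed_set_def by blast
  have bn: "b < n" using b cB unfolding closed_set_def by blast
  have ccard: "\<And>X x. closed_set n E X \<Longrightarrow> x \<in> X \<Longrightarrow> d ! x + 1 \<le> card X"
    using realizes_closed_card[OF r] n_def by blast
  have one: False if X: "closed_set n E X" and Y: "closed_set n E Y" and XY: "card X + card Y = n"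
      and "0 \<in> X" and y: "y \<in> Y" and big: "int (d ! 0) \<ge> int n - 2" for X Y y
  proof -
    have "d ! 0 + 1 \<le> card X" using ccard X \<open>0 \<in> X\<close> by blast
    hence cy: "card Y \<le> 1" using XY big by linarith
    have "y < n" using y Y unfolding closed_set_def by blast
    hence "d ! y \<in> set d" using n_def by simp
    hence "d ! y > 0" using zf unfolding zero_free_def by blast
    moreover have "d ! y + 1 \<le> card Y" using ccard Y y by blast
    ultimately show False using cy by linarith
  qed
  show False
  proof (cases "int (d ! 0) \<ge> int n - 2")
    case True
    have "0 < n" using an by simp
    hence "0 \<in> A \<or> 0 \<in> B" unfolding B_def by blast
    thus False
    proof
      assume "0 \<in> A" thus False using one[OF cA cB cardAB _ b True] by blast
    next
      assume "0 \<in> B" thus False using one[OF cB cA _ _ a True] cardAB by simp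
    qed
  next
    case False
    hence big: "d ! (n - 1) \<ge> n div 2" using s1 unfolding step1_def dd_def n_def Let_def by simp
    have "d ! (n - 1) \<le> d ! a" "d ! (n - 1) \<le> d ! b"
      using noninc_nth[OF ni] an bn n_def by auto
    moreover have "d ! a + 1 \<le> card A" "d ! b + 1 \<le> card B" using ccard cA cB a b by auto
    ultimately show False using big cardAB by linarith
  qed
qed


lemma graphical_even: "graphical xs \<Longrightarrow> even (sum_list xs)"
  using graphical_iff handshake by blast

lemma cut_complete:
  assumes r: "realizes E d" and ni: "nonincreasing d" and ns1: "\<not> step1 d"
    and A: "gcut (length d) E A"
  shows "step3 d \<or> step4 d"
proof -
  define n where "n = length d"
  have sg: "simple_graph_on n E" using r unfolding realizes_def n_def by blast
  have cA: "closed_set n E A" using A unfolding gcut_def n_def by blast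
  have cB: "closed_set n E ({..<n} - A)" using closed_compl[OF sg cA] .
  define C where "C = (if card A \<le> card ({..<n} - A) then A else {..<n} - A)"
  define D where "D = {..<n} - C"
  have cC: "closed_set n E C" using cA cB unfolding C_def by simp
  have cD: "closed_set n E D" using closed_compl[OF sg cC] unfolding D_def .
  have Csub: "C \<subseteq> {..<n}" using cC unfolding closed_set_def by blast
  have AA: "{..<n} - ({..<n} - A) = A" using cA unfolding closed_set_def by blast
  have Cne: "C \<noteq> {}" and Dne: "D \<noteq> {}"
    using A AA unfolding C_def D_def gcut_def n_def closed_set_def by auto
  define l where "l = card C"
  have cardD: "card D = n - l" using card_compl[OF cC] unfolding D_def l_def by simp
  have lD: "l \<le> card D"
    using card_compl[OF cA] AA unfolding l_def D_def C_def by auto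
  have ln: "l \<le> n" using card_compl[OF cC] unfolding l_def by simp
  have l2: "2 * l \<le> n" using lD cardD ln by linarith
  have ccard: "\<And>X x. closed_set n E X \<Longrightarrow> x \<in> X \<Longrightarrow> d ! x + 1 \<le> card X"
    using realizes_closed_card[OF r] n_def by blast
  have mono: "\<And>i j. i \<le> j \<Longrightarrow> j < n \<Longrightarrow> d ! j \<le> d ! i" using noninc_nth[OF ni] n_def by blast
  obtain c where c: "c \<in> C" using Cne by blast
  have cn: "c < n" using c Csub by blast
  have n0: "0 < n" using cn by simp
  have f1: "d ! (n - 1) + 1 \<le> l"
    using ccard[OF cC c] mono[of c "n - 1"] cn unfolding l_def by linarith
  have f2: "d ! 0 + 1 \<le> n - l"
  proof (cases "0 \<in> C")
    case True
    thus ?thesis using ccard[OF cC True] lD cardD unfolding l_def by linarith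
  next
    case False
    hence "0 \<in> D" using n0 unfolding D_def by blast
    thus ?thesis using ccard[OF cD] cardD by fastforce
  qed
  have f3: "d ! x < l" if x: "x \<in> C" for x
  proof -
    have "{v. v < n \<and> E x v} \<subseteq> C - {x}" using x cC sg unfolding closed_set_def simple_graph_on_def by auto
    moreover have "finite C" using Csub finite_subset by blast
    ultimately have "card {v. v < n \<and> E x v} \<le> card (C - {x})" by (simp add: card_mono)
    moreover have "card (C - {x}) < l" unfolding l_def using x \<open>finite C\<close>
      by (meson card_Diff1_less)
    moreover have "degree n E x = d ! x" using r x Csub unfolding realizes_def n_def by auto
    ultimately show ?thesis unfolding degree_def by linarith
  qed
  have lpos: "1 \<le> l" using f1 by simp
  have f4: "d ! (n - l) < l"
  proof -
    have "\<exists>x\<in>C. x \<le> n - l"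
    proof (rule ccontr)
      assume "\<not> (\<exists>x\<in>C. x \<le> n - l)"
      hence "C \<subseteq> {n - l + 1..<n}" using Csub by (fastforce simp: not_le)
      hence "card C \<le> card {n - l + 1..<n}" by (meson card_mono finite_atLeastLessThan)
      thus False using lpos ln unfolding l_def by simp
    qed
    then obtain x where "x \<in> C" "x \<le> n - l" by blast
    thus ?thesis using f3 mono[of x "n - l"] lpos ln by fastforce
  qed
  define m where "m = min_index_below d l"
  have ex: "\<exists>i. 1 \<le> i \<and> i \<le> n \<and> dd d i < l"
    using f4 lpos ln unfolding dd_def by (intro exI[of _ "n + 1 - l"]) auto
  have m1: "1 \<le> m \<and> m \<le> n \<and> dd d m < l"
    using LeastI_ex[OF ex] unfolding m_def min_index_below_def n_def .
  have m2: "l \<le> d ! (i - 1)" if "1 \<le> i" "i < m" for i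
  proof -
    have "\<not> (1 \<le> i \<and> i \<le> n \<and> dd d i < l)" using not_less_Least[of i] that m1
      unfolding m_def min_index_below_def n_def by blast
    thus ?thesis using that m1 unfolding dd_def by auto
  qed
  have f5: "C \<subseteq> {m - 1..<n}"
  proof
    fix x assume x: "x \<in> C"
    have "\<not> x < m - 1" using m2[of "x + 1"] f3[OF x] by fastforce
    thus "x \<in> {m - 1..<n}" using x Csub by auto
  qed
  have cm: "l \<le> n - m + 1" using card_mono[OF _ f5] m1 unfolding l_def by simp
  show ?thesis
  proof (cases "l \<le> n - m")
    case True
    define I where "I = Suc ` C"
    have I1: "I \<subseteq> {m..n}" unfolding I_def
    proof
      fix y assume "y \<in> Suc ` C"
      then obtain x where "x \<in> C" "y = Suc x" by blast
      thus "y \<in> {m..n}" using f5 m1 by fastforce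
    qed
    have I2: "card I = l" unfolding I_def l_def by (simp add: card_image)
    have I3: "(\<lambda>i. i - 1) ` I = C" unfolding I_def by (simp add: image_image)
    have sa: "subseq_at d I = nths d C" unfolding subseq_at_def I3 ..
    have so: "subseq_off d I = nths d D" unfolding subseq_off_def I3 D_def n_def
      by (simp add: atLeast0LessThan)
    have g1: "graphical (nths d C)" using restrict_graphical[OF r] cC n_def by simp
    have g2: "graphical (nths d D)" using restrict_graphical[OF r] cD n_def by simp
    have "step4 d" unfolding step4_def Let_def
      apply (rule exI[of _ l])
      using f1 l2 f2 f4 True I1 I2 sa so g1 g2 graphical_even lpos ln n0
      unfolding dd_def n_def[symmetric] m_def[symmetric]
      by (auto intro!: exI[of _ I])
    thus ?thesis by simp
  next
    case False
    hence lm: "l = n - m + 1" using cm by simp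
    have Ceq: "C = {m - 1..<n}"
    proof (rule card_subset_eq[OF _ f5])
      show "card C = card {m - 1..<n}" using lm m1 unfolding l_def by (simp add: Suc_diff_le)
    qed simp
    define s where "s = n - l"
    have Cs: "C = {s..<n}" using Ceq lm m1 unfolding s_def by auto
    have Ds: "D = {..<s}" using Cs unfolding D_def s_def by auto
    have tk: "take s d = nths d D" using Ds by simp
    have dr: "drop s d = nths d C"
      unfolding drop_eq_nths Cs by (rule nths_cong_len) (auto simp: n_def)
    have g1: "graphical (nths d C)" using restrict_graphical[OF r] cC n_def by simp
    have g2: "graphical (nths d D)" using restrict_graphical[OF r] cD n_def by simp
    have sin: "s \<in> {s. s < length d \<and> int s < int (length d) - int (dd d (s + 1))}"
      using f4 lpos ln unfolding s_def dd_def n_def by auto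
    have "s \<le> s_u d" unfolding s_u_def
      by (rule Max_ge) (use sin in auto)
    hence "step3 d" unfolding step3_def using f2 tk dr g1 g2 unfolding dd_def s_def by auto
    thus ?thesis by simp
  qed
qed


lemma split_cut:
  assumes "graphical xs" "graphical ys" "xs \<noteq> []" "ys \<noteq> []" "mset d = mset (xs @ ys)"
  shows "\<exists>E A. realizes E d \<and> gcut (length d) E A"
proof -
  obtain E1 E2 where "realizes E1 xs" "realizes E2 ys" using assms graphical_iff by blast
  then obtain E where E: "realizes E (xs @ ys)" "\<exists>A. gcut (length (xs @ ys)) E A"
    using append_realizes assms by blast
  then obtain E' where "realizes E' d" "\<exists>A. gcut (length d) E' A"
    using perm_realizes[OF E(1) assms(5)] by blast
  thus ?thesis by blast
qed

lemma sound2: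
  assumes g: "graphical_degree_sequence d" and zf: "zero_free d"
    and ns1: "\<not> step1 d" and s2: "step2 d"
  shows "\<exists>E A. realizes E d \<and> gcut (length d) E A"
proof -
  define n where "n = length d"
  have ni: "nonincreasing d" using g unfolding graphical_degree_sequence_def by blast
  obtain E0 where r: "realizes E0 d" using g unfolding graphical_degree_sequence_def by blast
  have n0: "n \<noteq> 0" using ns1 unfolding step1_def n_def Let_def by auto
  define k where "k = d ! 0"
  have eq: "d ! (n - 1) = k" using s2 unfolding step2_def dd_def k_def n_def by simp
  have all: "d ! i = k" if "i < n" for i
    using noninc_nth[OF ni, of 0 i] noninc_nth[OF ni, of i "n - 1"] that eq n0 k_def n_def by fastforce
  have drep: "d = replicate n k" by (rule nth_equalityI) (use all n_def in auto)
  have kpos: "0 < k" using zf n0 unfolding zero_free_def k_def n_def by simp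
  have kn: "k < n div 2" using ns1 eq unfolding step1_def dd_def Let_def n_def by auto
  have evn: "even (n * k)" using handshake[OF r] drep by (simp add: sum_list_replicate)
  have ev2: "even ((n - (k + 1)) * k)"
  proof (cases "even k")
    case False
    hence "even n" using evn by simp
    moreover have "k + 1 \<le> n" using kn by linarith
    ultimately have "even (n - (k + 1))" using False by presburger
    thus ?thesis by simp
  qed simp
  have g1: "graphical (replicate (k + 1) k)"
    using regular_realizable[of k "k + 1"] graphical_iff by simp
  have g2: "graphical (replicate (n - (k + 1)) k)"
    using regular_realizable[of k "n - (k + 1)"] ev2 kn graphical_iff by (simp add: mult.commute)
  have ne: "replicate (n - (k + 1)) k \<noteq> []" using kn by simp
  have "(k + 1) + (n - (k + 1)) = n" using kn by linarith
  hence "replicate (k + 1) k @ replicate (n - (k + 1)) k = d"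
    using drep by (metis replicate_add)
  thus ?thesis using split_cut[OF g1 g2 _ ne] by simp
qed

lemma su_less:
  assumes g: "graphical_degree_sequence d" and ns1: "\<not> step1 d"
  shows "s_u d < length d"
proof -
  define n where "n = length d"
  obtain E0 where r: "realizes E0 d" using g unfolding graphical_degree_sequence_def by blast
  have n0: "0 < n" using ns1 unfolding step1_def n_def Let_def by auto
  have "d ! 0 < n" using degree_less[of n E0 0] r n0 unfolding realizes_def n_def by auto
  hence "0 \<in> {s. s < n \<and> int s < int n - int (dd d (s + 1))}" using n0 unfolding dd_def by auto
  moreover have "finite {s. s < n \<and> int s < int n - int (dd d (s + 1))}" by simp
  ultimately have "s_u d \<in> {s. s < n \<and> int s < int n - int (dd d (s + 1))}"
    unfolding s_u_def n_def by (metis (no_types, lifting) Max_in empty_iff)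
  thus ?thesis unfolding n_def by simp
qed

lemma sound3:
  assumes g: "graphical_degree_sequence d"
    and ns1: "\<not> step1 d" and s3: "step3 d"
  shows "\<exists>E A. realizes E d \<and> gcut (length d) E A"
proof -
  obtain s where s: "dd d 1 + 1 \<le> s" "s \<le> s_u d" "graphical (take s d)" "graphical (drop s d)"
    using s3 unfolding step3_def by blast
  have sl: "s < length d" using su_less[OF g ns1] s by simp
  have ne1: "take s d \<noteq> []" using s(1) sl by (cases d) auto
  have ne2: "drop s d \<noteq> []" using sl by simp
  show ?thesis using split_cut[OF s(3) s(4) ne1 ne2] by simp
qed

lemma sound4:
  assumes g: "graphical_degree_sequence d"
    and ns1: "\<not> step1 d" and s4: "step4 d"
  shows "\<exists>E A. realizes E d \<and> gcut (length d) E A"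
proof -
  define n where "n = length d"
  have n0: "0 < n" using ns1 unfolding step1_def n_def Let_def by auto
  obtain l I where l: "dd d n + 1 \<le> l" "int l \<le> int (n div 2)"
      "dd d (n + 1 - l) < l" and I: "I \<subseteq> {min_index_below d l..n}" "card I = l"
      "graphical (subseq_at d I)" "graphical (subseq_off d I)"
    using s4 unfolding step4_def Let_def n_def by auto
  define m where "m = min_index_below d l"
  have ex: "\<exists>i. 1 \<le> i \<and> i \<le> n \<and> dd d i < l"
    using l by (intro exI[of _ "n + 1 - l"]) auto
  have m1: "1 \<le> m" using LeastI_ex[OF ex] unfolding m_def min_index_below_def n_def by blast
  define J where "J = (\<lambda>i. i - 1) ` I"
  have I1: "I \<subseteq> {1..n}" using I(1) m1 unfolding m_def by auto
  have J1: "J \<subseteq> {..<n}" unfolding J_def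
  proof
    fix y assume "y \<in> (\<lambda>i. i - 1) ` I"
    then obtain x where "x \<in> I" "y = x - 1" by blast
    thus "y \<in> {..<n}" using I1 n0 by fastforce
  qed
  have "inj_on (\<lambda>i. i - 1) I"
  proof (rule inj_onI)
    fix x y assume "x \<in> I" "y \<in> I" "x - 1 = y - 1"
    moreover have "1 \<le> x" "1 \<le> y" using I1 \<open>x \<in> I\<close> \<open>y \<in> I\<close> by auto
    ultimately show "x = y" by linarith
  qed
  hence cJ: "card J = l" using I(2) unfolding J_def by (simp add: card_image)
  have lpos: "1 \<le> l" using l by simp
  have lsm: "l < n" using l n0 by linarith
  define xs where "xs = nths d J"
  define ys where "ys = nths d (- J)"
  have xs': "subseq_at d I = xs" unfolding xs_def subseq_at_def J_def ..
  have ys': "subseq_off d I = ys" unfolding ys_def subseq_off_def J_def[symmetric]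
    by (rule nths_cong_len) auto
  have lx: "length xs = l" unfolding xs_def length_nths using J1 cJ n_def
    by (metis (no_types, lifting) Collect_cong lessThan_iff subsetD Collect_mem_eq)
  have ms: "mset d = mset (xs @ ys)" using mset_nths_split[of d J] unfolding xs_def ys_def by simp
  hence "length ys = n - l" using lx unfolding n_def by (metis length_append size_mset add_diff_cancel_left')
  hence "ys \<noteq> []" "xs \<noteq> []" using lx lsm lpos by auto
  thus ?thesis using split_cut I(3,4) xs' ys' ms by metis
qed

lemma fc_iff:
  assumes g: "graphical_degree_sequence d"
  shows "forcibly_connected d \<longleftrightarrow> \<not> (\<exists>E A. realizes E d \<and> gcut (length d) E A)"
  using g conn_cut unfolding forcibly_connected_def realizes_def by blast

theorem mainTheorem1:
  fixes d :: "nat list"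
  assumes "graphical_degree_sequence d"
    and "zero_free d"
  shows "procedure d \<longleftrightarrow> forcibly_connected d"
proof -
  have ni: "nonincreasing d" using assms(1) unfolding graphical_degree_sequence_def by blast
  show ?thesis
  proof (cases "step1 d")
    case True
    hence "forcibly_connected d" using fc_iff[OF assms(1)] step1_sound[OF _ ni assms(2) True] by blast
    thus ?thesis using True unfolding procedure_def by simp
  next
    case ns1: False
    show ?thesis
    proof (cases "step2 d \<or> step3 d \<or> step4 d")
      case True
      hence "\<not> forcibly_connected d" using fc_iff[OF assms(1)] sound2[OF assms ns1]
        sound3[OF assms(1) ns1] sound4[OF assms(1) ns1] by blast
      thus ?thesis using ns1 True unfolding procedure_def by auto
    next
      case False
      hence "forcibly_connected d" using fc_iff[OF assms(1)] cut_complete[OF _ ni ns1] by blast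
      thus ?thesis using ns1 False unfolding procedure_def by auto
    qed
  qed
qed

end
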